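(* Let $\Delta$ and $\Delta'$ be fat triangles, and let $S(\Delta)$, $S(\Delta')$ be sets of canonical chords (one per vertex) of $\Delta$ and $\Delta'$ respectively, with $P(\Delta)$ the set of endpoints of the chords in $S(\Delta)$. If $\Delta$ intersects $\Delta'$, then at least one of the following holds: (i) $\Delta$ contains a vertex of $\Delta'$; (ii) a point from $P(\Delta)$ lies inside $\Delta'$; (iii) a canonical chord from $S(\Delta)$ intersects a canonical chord from $S(\Delta')$.
   Context: Fix an absolute constant $\alpha>0$; a triangle is fat if its minimum angle is at least $\alpha$. Let $A:=\{i\cdot(\alpha/2): 0\le i\le\lfloor 4\pi/\alpha\rfloor\}$ be the set of canonical directions (angles). A canonical segment is a segment whose direction is in $A$. A canonical chord of a fat triangle $\Delta$ is a canonical segment connecting a vertex of $\Delta$ to the opposite side of $\Delta$ (each vertex of a fat triangle admits one). $S(\Delta)$ is a set of three canonical chords of $\Delta$, one per vertex, and $P(\Delta)$ is the set of endpoints of these chords (which includes the vertices of $\Delta$). *)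

theory Defs
  imports "HOL-Analysis.Analysis"
begin

definition triangle :: "complex \<Rightarrow> complex \<Rightarrow> complex \<Rightarrow> complex set" where
  "triangle a b c = convex hull {a, b, c}"

definition vertex_angle :: "complex \<Rightarrow> complex \<Rightarrow> complex \<Rightarrow> real" where
  "vertex_angle a b c = arccos (((b - a) \<bullet> (c - a)) / (norm (b - a) * norm (c - a)))"

definition fat :: "real \<Rightarrow> complex \<Rightarrow> complex \<Rightarrow> complex \<Rightarrow> bool" where
  "fat \<alpha> a b c \<longleftrightarrow> \<not> collinear {a, b, c} \<and>
     vertex_angle a b c \<ge> \<alpha> \<and> vertex_angle b c a \<ge> \<alpha> \<and> vertex_angle c a b \<ge> \<alpha>"

definition canonical_dirs :: "real \<Rightarrow> real set" where
  "canonical_dirs \<alpha> = {real i * (\<alpha> / 2) | i. i \<le> nat \<lfloor>4 * pi / \<alpha>\<rfloor>}"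

definition canonical_segment :: "real \<Rightarrow> complex \<Rightarrow> complex \<Rightarrow> bool" where
  "canonical_segment \<alpha> p q \<longleftrightarrow>
     (\<exists>\<theta>\<in>canonical_dirs \<alpha>. \<exists>r::real. r \<noteq> 0 \<and> q - p = complex_of_real r * cis \<theta>)"

definition canonical_chord :: "real \<Rightarrow> complex \<Rightarrow> complex \<Rightarrow> complex \<Rightarrow> complex \<Rightarrow> bool" where
  "canonical_chord \<alpha> a b c p \<longleftrightarrow> p \<in> closed_segment b c \<and> canonical_segment \<alpha> a p"

end

theory Submission
  imports Defs
begin

definition cr :: "complex \<Rightarrow> complex \<Rightarrow> complex \<Rightarrow> real" where
  "cr p q r = Re (q - p) * Im (r - p) - Im (q - p) * Re (r - p)"

lemma cr_affine: "cr p q ((1 - t) *\<^sub>R u + t *\<^sub>R v) = (1 - t) * cr p q u + t * cr p q v"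
  by (simp add: cr_def scaleR_conv_of_real algebra_simps)

lemma cr_affine3: "u + v + w = 1 \<Longrightarrow> cr p q (u *\<^sub>R x + v *\<^sub>R y + w *\<^sub>R z) = u * cr p q x + v * cr p q y + w * cr p q z"
proof -
  assume "u + v + w = 1"
  hence w: "w = 1 - u - v" by simp
  show ?thesis unfolding w by (simp add: cr_def algebra_simps)
qed

lemma cr_seg: assumes "x \<in> closed_segment p q" shows "cr p q x = 0"
proof -
  obtain u where x: "x = (1 - u) *\<^sub>R p + u *\<^sub>R q" using assms by (auto simp: closed_segment_def)
  have "cr p q p = 0" "cr p q q = 0" by (simp_all add: cr_def algebra_simps)
  thus ?thesis by (simp add: x cr_affine)
qed

lemma cr_line:
  assumes "p \<noteq> q" "cr p q y = 0"
  shows "\<exists>t::real. y = p + t *\<^sub>R (q - p)"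
proof -
  define d where "d = q - p"
  have d0: "d \<noteq> 0" using assms d_def by auto
  define t where "t = Re ((y - p) * cnj d) / (cmod d)^2"
  have im: "Im ((y - p) * cnj d) = 0" using assms(2) by (simp add: cr_def d_def algebra_simps)
  have "(y - p) * cnj d = of_real (Re ((y - p) * cnj d))" using im by (simp add: complex_eq_iff)
  hence "(y - p) * cnj d * d = of_real (Re ((y - p) * cnj d)) * d" by simp
  moreover have "cnj d * d = of_real ((cmod d)^2)" using cmod_power2[of d] by (simp add: complex_eq_iff power2_eq_square)
  ultimately have "(y - p) * of_real ((cmod d)^2) = of_real (Re ((y - p) * cnj d)) * d"
    by (metis mult.assoc)
  hence "y - p = of_real t * d" using d0 by (simp add: t_def field_simps)
  thus ?thesis by (intro exI[of _ t]) (simp add: scaleR_conv_of_real d_def algebra_simps)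
qed

lemma L1:
  assumes "convex T" "p \<notin> T" "q \<notin> T" "x \<in> closed_segment p q" "x \<in> T" "y \<in> T" "cr p q y = 0"
  shows "y \<in> closed_segment p q"
proof -
  have pq: "p \<noteq> q" using assms by auto
  obtain t where t: "y = p + t *\<^sub>R (q - p)" using cr_line[OF pq assms(7)] by blast
  obtain s where s: "0 \<le> s" "s \<le> 1" "x = (1 - s) *\<^sub>R p + s *\<^sub>R q"
    using assms(4) by (auto simp: closed_segment_def)
  have x': "x = p + s *\<^sub>R (q - p)" using s(3) by (simp add: algebra_simps)
  have e1: "(1 - l) *\<^sub>R y + l *\<^sub>R x = p + ((1 - l) * t + l * s) *\<^sub>R (q - p)" for l
    by (simp add: t x' algebra_simps)
  have inT: "0 \<le> l \<Longrightarrow> l \<le> 1 \<Longrightarrow> (1 - l) *\<^sub>R y + l *\<^sub>R x \<in> T" for l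
    using assms(1,5,6) by (intro convexD) auto
  show ?thesis
  proof (cases "t < 0")
    case True
    define l where "l = t / (t - s)"
    have l: "0 \<le> l" "l \<le> 1" using True s by (auto simp: l_def divide_simps)
    have ts: "t - s \<noteq> 0" using True s by simp
    have e2: "(1 - l) * t + l * s = 0" using ts by (simp add: l_def field_simps)
    have "(1 - l) *\<^sub>R y + l *\<^sub>R x = p" using e1[of l] e2 by simp
    then show ?thesis using inT[OF l] assms by simp
  next
    case f1: False
    show ?thesis
    proof (cases "t > 1")
      case True
      define l where "l = (t - 1) / (t - s)"
      have l: "0 \<le> l" "l \<le> 1" using True s by (auto simp: l_def divide_simps)
      have ts: "t - s \<noteq> 0" using True s by simp
      have "l * (t - s) = t - 1" using ts by (simp add: l_def)
      hence e2: "(1 - l) * t + l * s = 1" by (simp add: algebra_simps)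
      have "(1 - l) *\<^sub>R y + l *\<^sub>R x = q" using e1[of l] e2 by simp
      then show ?thesis using inT[OF l] assms by simp
    next
      case False
      then show ?thesis using f1 t by (auto simp: closed_segment_def intro!: exI[of _ t] simp: algebra_simps)
    qed
  qed
qed

lemma sign3:
  fixes fa fb fc u v w :: real
  assumes "fa \<noteq> 0" "fb \<noteq> 0" "fc \<noteq> 0" "0 \<le> u" "0 \<le> v" "0 \<le> w" "u + v + w = 1"
    "u * fa + v * fb + w * fc = 0"
  shows "(fa * fb < 0 \<and> fa * fc < 0) \<or> (fb * fa < 0 \<and> fb * fc < 0) \<or> (fc * fa < 0 \<and> fc * fb < 0)"
proof (rule ccontr)
  assume H: "\<not> ?thesis"
  have s1: "fa * fb < 0 \<longleftrightarrow> (fa > 0) \<noteq> (fb > 0)" using assms(1,2) by (auto simp: mult_less_0_iff)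
  have s2: "fa * fc < 0 \<longleftrightarrow> (fa > 0) \<noteq> (fc > 0)" using assms(1,3) by (auto simp: mult_less_0_iff)
  have s3: "fb * fc < 0 \<longleftrightarrow> (fb > 0) \<noteq> (fc > 0)" using assms(2,3) by (auto simp: mult_less_0_iff)
  have c: "fb * fa = fa * fb" "fc * fa = fa * fc" "fc * fb = fb * fc" by (simp_all add: mult.commute)
  have H': "\<not> ((fa * fb < 0 \<and> fa * fc < 0) \<or> (fa * fb < 0 \<and> fb * fc < 0) \<or> (fa * fc < 0 \<and> fb * fc < 0))"
    using H unfolding c .
  have same0: "(fa > 0 \<and> fb > 0 \<and> fc > 0) \<or> (\<not> fa > 0 \<and> \<not> fb > 0 \<and> \<not> fc > 0)"
    using H' unfolding s1 s2 s3 by blast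
  have same: "(fa > 0 \<and> fb > 0 \<and> fc > 0) \<or> (fa < 0 \<and> fb < 0 \<and> fc < 0)"
    using same0 assms(1-3) by linarith
  thus False
  proof
    assume P: "fa > 0 \<and> fb > 0 \<and> fc > 0"
    have "u * fa \<ge> 0" "v * fb \<ge> 0" "w * fc \<ge> 0" using P assms by auto
    hence "u * fa = 0" "v * fb = 0" "w * fc = 0" using assms(8) by linarith+
    hence "u = 0" "v = 0" "w = 0" using P by auto
    thus False using assms(7) by simp
  next
    assume P: "fa < 0 \<and> fb < 0 \<and> fc < 0"
    have "u * fa \<le> 0" "v * fb \<le> 0" "w * fc \<le> 0" using P assms by (auto simp: mult_nonneg_nonpos)
    hence "u * fa = 0" "v * fb = 0" "w * fc = 0" using assms(8) by linarith+
    hence "u = 0" "v = 0" "w = 0" using P by auto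
    thus False using assms(7) by simp
  qed
qed

lemma lone:
  assumes "pa \<in> closed_segment b c" "cr p q a * cr p q b < 0" "cr p q a * cr p q c < 0"
  shows "\<exists>y\<in>closed_segment a pa. cr p q y = 0"
proof -
  obtain s where s: "0 \<le> s" "s \<le> 1" "pa = (1 - s) *\<^sub>R b + s *\<^sub>R c"
    using assms(1) by (auto simp: closed_segment_def)
  define fa fb fc fp where "fa = cr p q a" "fb = cr p q b" "fc = cr p q c" "fp = cr p q pa"
  have fp: "fp = (1 - s) * fb + s * fc" by (simp add: fa_fb_fc_fp_def s(3) cr_affine)
  have "fa * fp = (1 - s) * (fa * fb) + s * (fa * fc)" by (simp add: fp algebra_simps)
  moreover have "(1 - s) * (fa * fb) \<le> 0" "s * (fa * fc) \<le> 0"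
    using s assms(2,3) by (auto simp: fa_fb_fc_fp_def mult_nonneg_nonpos)
  moreover have "(1 - s) * (fa * fb) < 0 \<or> s * (fa * fc) < 0"
  proof (cases "s = 0")
    case True thus ?thesis using assms(2) by (simp add: fa_fb_fc_fp_def)
  next
    case False hence "s > 0" using s by simp
    thus ?thesis using assms(3) mult_pos_neg[of s "fa * fc"] by (simp add: fa_fb_fc_fp_def)
  qed
  ultimately have neg: "fa * fp < 0" by linarith
  hence d: "fa - fp \<noteq> 0" by auto
  define t where "t = fa / (fa - fp)"
  have "(fa > 0 \<and> fp < 0) \<or> (fa < 0 \<and> fp > 0)" using neg by (simp add: mult_less_0_iff)
  hence t01: "0 \<le> t" "t \<le> 1"
    by (auto simp: t_def zero_le_divide_iff divide_le_eq_1)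
  have e: "t * (fa - fp) = fa" using d by (simp add: t_def)
  have "(1 - t) * fa + t * fp = fa - t * (fa - fp)" by (simp add: algebra_simps)
  hence "(1 - t) * fa + t * fp = 0" using e by linarith
  hence "cr p q ((1 - t) *\<^sub>R a + t *\<^sub>R pa) = 0" by (simp add: cr_affine fa_fb_fc_fp_def)
  moreover have "(1 - t) *\<^sub>R a + t *\<^sub>R pa \<in> closed_segment a pa"
    using t01 by (auto simp: closed_segment_def)
  ultimately show ?thesis by blast
qed

lemma chordA:
  fixes a b c pa pb pc p q x :: complex
  assumes "pa \<in> closed_segment b c" "pb \<in> closed_segment c a" "pc \<in> closed_segment a b"
    "p \<notin> convex hull {a,b,c}" "q \<notin> convex hull {a,b,c}"
    "x \<in> closed_segment p q" "x \<in> convex hull {a,b,c}"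
  shows "a \<in> closed_segment p q \<or> b \<in> closed_segment p q \<or> c \<in> closed_segment p q \<or>
    closed_segment p q \<inter> closed_segment a pa \<noteq> {} \<or>
    closed_segment p q \<inter> closed_segment b pb \<noteq> {} \<or>
    closed_segment p q \<inter> closed_segment c pc \<noteq> {}"
proof -
  define T where "T = convex hull {a,b,c}"
  have cT: "convex T" by (simp add: T_def)
  have abc: "a \<in> T" "b \<in> T" "c \<in> T" by (simp_all add: T_def hull_inc)
  have segT: "closed_segment u v \<subseteq> T" if "u \<in> T" "v \<in> T" for u v
    using cT that by (simp add: closed_segment_subset)
  have chT: "closed_segment a pa \<subseteq> T" "closed_segment b pb \<subseteq> T" "closed_segment c pc \<subseteq> T"
    using segT abc assms(1-3) by (meson subsetD)+
  have onL: "y \<in> closed_segment p q" if "y \<in> T" "cr p q y = 0" for y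
    using L1[OF cT _ _ assms(6) _ that] assms(4,5,7) by (simp add: T_def)
  have fx: "cr p q x = 0" using assms(6) by (rule cr_seg)
  obtain u v w where uvw: "0 \<le> u" "0 \<le> v" "0 \<le> w" "u + v + w = 1"
      "x = u *\<^sub>R a + v *\<^sub>R b + w *\<^sub>R c"
    using assms(7) by (auto simp: convex_hull_3)
  have sum0: "u * cr p q a + v * cr p q b + w * cr p q c = 0"
    using fx cr_affine3[OF uvw(4), of p q a b c] uvw(5) by simp
  show ?thesis
  proof (cases "cr p q a = 0 \<or> cr p q b = 0 \<or> cr p q c = 0")
    case True
    then show ?thesis using onL[OF abc(1)] onL[OF abc(2)] onL[OF abc(3)] by blast
  next
    case False
    hence "(cr p q a * cr p q b < 0 \<and> cr p q a * cr p q c < 0) \<or>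
      (cr p q b * cr p q a < 0 \<and> cr p q b * cr p q c < 0) \<or>
      (cr p q c * cr p q a < 0 \<and> cr p q c * cr p q b < 0)"
      using sign3[OF _ _ _ uvw(1-4) sum0] by blast
    thus ?thesis
    proof (elim disjE conjE)
      assume "cr p q a * cr p q b < 0" "cr p q a * cr p q c < 0"
      then obtain y where y1: "y \<in> closed_segment a pa" and y2: "cr p q y = 0" using lone[OF assms(1)] by blast
      have "y \<in> T" using y1 chT by blast
      hence "y \<in> closed_segment p q" using onL y2 by blast
      hence "closed_segment p q \<inter> closed_segment a pa \<noteq> {}" using y1 by blast
      thus ?thesis by simp
    next
      assume "cr p q b * cr p q a < 0" "cr p q b * cr p q c < 0"
      then obtain y where y1: "y \<in> closed_segment b pb" and y2: "cr p q y = 0" using lone[OF assms(2)] by blast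
      have "y \<in> T" using y1 chT by blast
      hence "y \<in> closed_segment p q" using onL y2 by blast
      hence "closed_segment p q \<inter> closed_segment b pb \<noteq> {}" using y1 by blast
      thus ?thesis by simp
    next
      assume "cr p q c * cr p q a < 0" "cr p q c * cr p q b < 0"
      then obtain y where y1: "y \<in> closed_segment c pc" and y2: "cr p q y = 0" using lone[OF assms(3)] by blast
      have "y \<in> T" using y1 chT by blast
      hence "y \<in> closed_segment p q" using onL y2 by blast
      hence "closed_segment p q \<inter> closed_segment c pc \<noteq> {}" using y1 by blast
      thus ?thesis by simp
    qed
  qed
qed

lemma step2:
  fixes a b c pa pb pc u v z :: complex
  assumes "pa \<in> closed_segment b c" "pb \<in> closed_segment c a" "pc \<in> closed_segment a b"
    "u \<notin> convex hull {a,b,c}" "v \<notin> convex hull {a,b,c}"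
    "z \<in> closed_segment u v" "z \<in> convex hull {a,b,c}"
    "closed_segment u v \<subseteq> T" "a \<notin> T" "b \<notin> T" "c \<notin> T"
  shows "\<exists>w\<in>T. w \<in> closed_segment a pa \<or> w \<in> closed_segment b pb \<or> w \<in> closed_segment c pc"
  using chordA[OF assms(1-7)] assms(8-11) by blast

lemma step3:
  fixes a b c pa pb pc p q w :: complex
  assumes "pa \<in> closed_segment b c" "pb \<in> closed_segment c a" "pc \<in> closed_segment a b"
    "p \<notin> convex hull {a,b,c}" "q \<notin> convex hull {a,b,c}"
    "w \<in> closed_segment p q" "w \<in> convex hull {a,b,c}"
    "closed_segment p q \<subseteq> T" "a \<notin> T" "b \<notin> T" "c \<notin> T"
  shows "closed_segment p q \<inter> closed_segment a pa \<noteq> {} \<or>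
    closed_segment p q \<inter> closed_segment b pb \<noteq> {} \<or>
    closed_segment p q \<inter> closed_segment c pc \<noteq> {}"
  using chordA[OF assms(1-7)] assms(8-11) by blast

theorem mainTheorem10:
  fixes \<alpha> :: real and a b c pa pb pc a' b' c' pa' pb' pc' :: complex
  assumes "\<alpha> > 0"
    and "fat \<alpha> a b c" and "fat \<alpha> a' b' c'"
    and "canonical_chord \<alpha> a b c pa" and "canonical_chord \<alpha> b c a pb"
    and "canonical_chord \<alpha> c a b pc"
    and "canonical_chord \<alpha> a' b' c' pa'" and "canonical_chord \<alpha> b' c' a' pb'"
    and "canonical_chord \<alpha> c' a' b' pc'"
    and "triangle a b c \<inter> triangle a' b' c' \<noteq> {}"
  shows "(\<exists>v\<in>{a', b', c'}. v \<in> triangle a b c)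
       \<or> (\<exists>p\<in>{a, b, c, pa, pb, pc}. p \<in> triangle a' b' c')
       \<or> (\<exists>s\<in>{closed_segment a pa, closed_segment b pb, closed_segment c pc}.
            \<exists>s'\<in>{closed_segment a' pa', closed_segment b' pb', closed_segment c' pc'}.
              s \<inter> s' \<noteq> {})"
proof (rule ccontr)
  define D where "D = convex hull {a,b,c}"
  define D' where "D' = convex hull {a',b',c'}"
  have ch: "pa \<in> closed_segment b c" "pb \<in> closed_segment c a" "pc \<in> closed_segment a b"
    using assms(4-6) by (simp_all add: canonical_chord_def)
  have ch': "pa' \<in> closed_segment b' c'" "pb' \<in> closed_segment c' a'" "pc' \<in> closed_segment a' b'"
    using assms(7-9) by (simp_all add: canonical_chord_def)
  assume N: "\<not> ?thesis"
  have nv: "a' \<notin> D" "b' \<notin> D" "c' \<notin> D" using N by (auto simp: D_def triangle_def)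
  have np: "a \<notin> D'" "b \<notin> D'" "c \<notin> D'" "pa \<notin> D'" "pb \<notin> D'" "pc \<notin> D'"
    using N by (auto simp: D'_def triangle_def)
  have nc: "closed_segment p q \<inter> closed_segment a' pa' = {}"
       "closed_segment p q \<inter> closed_segment b' pb' = {}"
       "closed_segment p q \<inter> closed_segment c' pc' = {}"
    if "(p = a \<and> q = pa) \<or> (p = b \<and> q = pb) \<or> (p = c \<and> q = pc)" for p q
    using N that by auto
  have cD: "convex D" "convex D'" by (simp_all add: D_def D'_def)
  have vD: "a \<in> D" "b \<in> D" "c \<in> D" by (simp_all add: D_def hull_inc)
  have vD': "a' \<in> D'" "b' \<in> D'" "c' \<in> D'" by (simp_all add: D'_def hull_inc)
  have "D \<inter> frontier D' \<noteq> {}"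
  proof (rule connected_Int_frontier)
    show "connected D" using cD by (simp add: convex_connected)
    show "D \<inter> D' \<noteq> {}" using assms(10) by (simp add: D_def D'_def triangle_def)
    show "D - D' \<noteq> {}" using vD np by blast
  qed
  then obtain z where z: "z \<in> D" "z \<in> closed_segment a' b' \<union> closed_segment b' c' \<union> closed_segment c' a'"
    using frontier_of_triangle[of a' b' c'] by (auto simp: D'_def)
  have segD': "closed_segment u v \<subseteq> D'" if "u \<in> D'" "v \<in> D'" for u v
    using cD(2) that by (simp add: closed_segment_subset)
  have segD: "closed_segment u v \<subseteq> D" if "u \<in> D" "v \<in> D" for u v
    using cD(1) that by (simp add: closed_segment_subset)
  have "\<exists>w\<in>D'. w \<in> closed_segment a pa \<or> w \<in> closed_segment b pb \<or> w \<in> closed_segment c pc"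
    using z(2)
  proof (elim UnE)
    assume "z \<in> closed_segment a' b'"
    thus ?thesis using step2[OF ch, of a' b' z D'] nv z(1) segD' vD' np unfolding D_def by blast
  next
    assume "z \<in> closed_segment b' c'"
    thus ?thesis using step2[OF ch, of b' c' z D'] nv z(1) segD' vD' np unfolding D_def by blast
  next
    assume "z \<in> closed_segment c' a'"
    thus ?thesis using step2[OF ch, of c' a' z D'] nv z(1) segD' vD' np unfolding D_def by blast
  qed
  then obtain w where w: "w \<in> D'" "w \<in> closed_segment a pa \<or> w \<in> closed_segment b pb \<or> w \<in> closed_segment c pc"
    by blast
  have chD: "closed_segment a pa \<subseteq> D" "closed_segment b pb \<subseteq> D" "closed_segment c pc \<subseteq> D"
    using segD vD ch by (meson subsetD)+
  show False
    using w(2)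
  proof (elim disjE)
    assume h: "w \<in> closed_segment a pa"
    show False using step3[OF ch', of a pa w D] h w(1) chD nv np nc[of a pa] unfolding D'_def by blast
  next
    assume h: "w \<in> closed_segment b pb"
    show False using step3[OF ch', of b pb w D] h w(1) chD nv np nc[of b pb] unfolding D'_def by blast
  next
    assume h: "w \<in> closed_segment c pc"
    show False using step3[OF ch', of c pc w D] h w(1) chD nv np nc[of c pc] unfolding D'_def by blast
  qed
qed

end
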